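(* There is a one-pass streaming algorithm in the VAdeg model which, given $\varepsilon\in(0,1)$ and an integer $T\ge1$, and given as input stream a graph $G=(V,E)$ with $|V|=n$ together with a coloring $f:V\to[C]$ satisfying the promise $|E_M|\ge T$, outputs with high probability an estimate $\widehat m$ with $|\widehat m-|E_M||\le\varepsilon|E_M|$. With high probability it uses $\widetilde{\mathcal O}\!\left(\min\left\{|V|,\frac{|E|}{T}\right\}\right)$ space. The algorithm does not need to know $|E|$ in advance.
   Context: Graphs are simple and undirected, $|V|=n$, $|E|=m$. A coloring $f:V\to[C]$ is given. An edge $(u,v)$ is monochromatic if $f(u)=f(v)$, and $E_M$ denotes the set of monochromatic edges. VA (Vertex Arrival) streaming model: the vertices are revealed one at a time in an arbitrary order. When a vertex $v$ is revealed, its color $f(v)$ is revealed, and then all edges between $v$ and previously revealed vertices are revealed one by one. Colors of earlier vertices are not revealed again. VAdeg model: the same as the VA model, except that when a vertex $v$ is revealed the algorithm may also query its degree $d_G(v)$ in $G$ from an oracle. "With high probability" means probability at least $1-1/n^c$ for an absolute constant $c>0$. $\widetilde{\mathcal O}(\cdot)$ hides factors polynomial in $\log n$ and $1/\varepsilon$. Space is counted in words of $O(\log n)$ bits. *)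

theory Defs
  imports "HOL-Probability.Probability"
begin

definition simple_graph :: "nat \<Rightarrow> nat set set \<Rightarrow> bool" where
  "simple_graph n Es \<longleftrightarrow> (\<forall>e\<in>Es. e \<subseteq> {0..<n} \<and> card e = 2)"

definition degree :: "nat set set \<Rightarrow> nat \<Rightarrow> nat" where
  "degree Es v = card {e\<in>Es. v \<in> e}"

definition mono_edges :: "nat set set \<Rightarrow> (nat \<Rightarrow> nat) \<Rightarrow> nat set set" where
  "mono_edges Es f = {e\<in>Es. \<exists>u v. e = {u, v} \<and> f u = f v}"

text \<open>VArr v c d: vertex v arrives with colour c and (oracle) degree d.
  EArr u v: the edge between the current vertex v and an earlier vertex u.\<close>
datatype event = VArr nat nat nat | EArr nat nat

text \<open>A valid VAdeg stream for graph Es on {0..<n} with coloring f: an arbitrary vertex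
  order vs, and for each vertex an arbitrary order of its edges to earlier vertices.\<close>
definition VAdeg_stream :: "nat \<Rightarrow> nat set set \<Rightarrow> (nat \<Rightarrow> nat) \<Rightarrow> event list \<Rightarrow> bool" where
  "VAdeg_stream n Es f xs \<longleftrightarrow>
     (\<exists>vs es. distinct vs \<and> set vs = {0..<n} \<and>
        (\<forall>i<n. distinct (es i) \<and> set (es i) = {u\<in>set (take i vs). {u, vs!i} \<in> Es}) \<and>
        xs = concat (map (\<lambda>i. VArr (vs!i) (f (vs!i)) (degree Es (vs!i))
                                # map (\<lambda>u. EArr u (vs!i)) (es i)) [0..<n]))"

text \<open>Parameters given to the algorithm: (n, epsilon, T). |E| is NOT given.
  The memory state is a list of words (natural numbers); space = length of the list.\<close>
type_synonym params = "nat \<times> real \<times> nat"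

record stream_alg =
  alg_init :: "params \<Rightarrow> nat list pmf"
  alg_step :: "params \<Rightarrow> nat list \<Rightarrow> event \<Rightarrow> nat list pmf"
  alg_out  :: "params \<Rightarrow> nat list \<Rightarrow> real"

fun run :: "(params \<Rightarrow> nat list \<Rightarrow> event \<Rightarrow> nat list pmf) \<Rightarrow> params \<Rightarrow> nat list
             \<Rightarrow> event list \<Rightarrow> nat list list pmf" where
  "run st p s [] = return_pmf [s]"
| "run st p s (x # xs) = bind_pmf (st p s x) (\<lambda>s'. map_pmf (\<lambda>tr. s # tr) (run st p s' xs))"

definition exec :: "stream_alg \<Rightarrow> params \<Rightarrow> event list \<Rightarrow> nat list list pmf" where
  "exec A p xs = bind_pmf (alg_init A p) (\<lambda>s. run (alg_step A) p s xs)"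

definition trace_space :: "nat list list \<Rightarrow> nat" where
  "trace_space tr = Max (length ` set tr)"

end

theory Submission
  imports Defs
begin


type_synonym ent = "nat \<times> nat \<times> nat \<times> nat"
type_synonym ast = "nat \<times> ent list"

fun flat :: "ent list \<Rightarrow> nat list" where
  "flat [] = []"
| "flat ((a,b,c,d) # r) = a # b # c # d # flat r"

fun ents :: "nat list \<Rightarrow> ent list" where
  "ents (a # b # c # d # r) = (a,b,c,d) # ents r"
| "ents _ = []"

lemma ents_flat[simp]: "ents (flat es) = es"
  by (induction es) auto

lemma length_flat[simp]: "length (flat es) = 4 * length es"
  by (induction es) auto

lemma set_flat: "x \<in> set (flat es) \<Longrightarrow> \<exists>(a,b,c,d)\<in>set es. x = a \<or> x = b \<or> x = c \<or> x = d"
  by (induction es rule: flat.induct) auto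

definition enc :: "ast \<Rightarrow> nat list" where
  "enc a = fst a # flat (snd a)"

definition dec :: "nat list \<Rightarrow> ast" where
  "dec s = (hd s, ents (tl s))"

lemma dec_enc[simp]: "dec (enc a) = a"
  by (cases a) (simp add: enc_def dec_def)

definition qv :: "params \<Rightarrow> real" where
  "qv p = (case p of (n, \<epsilon>, T) \<Rightarrow> 8 * (ln (real n) + 2) / (\<epsilon>^2 * real T))"

definition pr :: "params \<Rightarrow> nat \<Rightarrow> real" where
  "pr p d = min 1 (real d * qv p)"

fun astep :: "params \<Rightarrow> ast \<Rightarrow> event \<Rightarrow> ast pmf" where
  "astep p (cur, es) (VArr w c d) =
     map_pmf (\<lambda>b. (c, if b then es @ [(w,c,d,0)] else es)) (bernoulli_pmf (pr p d))"
| "astep p (cur, es) (EArr u v) =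
     return_pmf (cur, map (\<lambda>(w,c,d,k). if w = u \<and> c = cur then (w,c,d,Suc k) else (w,c,d,k)) es)"

fun afin :: "params \<Rightarrow> ast \<Rightarrow> event list \<Rightarrow> ast pmf" where
  "afin p a [] = return_pmf a"
| "afin p a (x # xs) = bind_pmf (astep p a x) (\<lambda>a'. afin p a' xs)"

definition est :: "params \<Rightarrow> ent list \<Rightarrow> real" where
  "est p es = (\<Sum>(w,c,d,k)\<leftarrow>es. real k / pr p d)"

definition Alg :: stream_alg where
  "Alg = \<lparr> alg_init = (\<lambda>p. return_pmf (enc (0, []))),
           alg_step = (\<lambda>p s x. map_pmf enc (astep p (dec s) x)),
           alg_out = (\<lambda>p s. est p (snd (dec s))) \<rparr>"

lemma run_nonempty: "tr \<in> set_pmf (run st p s xs) \<Longrightarrow> tr \<noteq> []"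
  by (induction xs arbitrary: s tr) auto

lemma run_hd: "tr \<in> set_pmf (run st p s xs) \<Longrightarrow> hd tr = s"
  by (induction xs arbitrary: s tr) auto

lemma last_run: "map_pmf last (run (alg_step Alg) p (enc a) xs) = map_pmf enc (afin p a xs)"
proof (induction xs arbitrary: a)
  case Nil
  then show ?case by simp
next
  case (Cons x xs)
  have "map_pmf last (run (alg_step Alg) p (enc a) (x # xs)) =
     bind_pmf (astep p a x) (\<lambda>a'. map_pmf last (map_pmf ((#) (enc a)) (run (alg_step Alg) p (enc a') xs)))"
    by (simp add: Alg_def bind_map_pmf map_bind_pmf)
  also have "\<dots> = bind_pmf (astep p a x) (\<lambda>a'. map_pmf last (run (alg_step Alg) p (enc a') xs))"
    by (intro bind_pmf_cong refl) (auto simp: pmf.map_comp o_def intro!: map_pmf_cong dest: run_nonempty)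
  also have "\<dots> = map_pmf enc (afin p a (x # xs))"
    by (simp add: Cons map_bind_pmf)
  finally show ?case .
qed



fun fut :: "nat \<Rightarrow> nat \<Rightarrow> nat \<Rightarrow> event list \<Rightarrow> nat" where
  "fut w c cur [] = 0"
| "fut w c cur (VArr w' c' d # xs) = fut w c c' xs"
| "fut w c cur (EArr u v # xs) = (if u = w \<and> c = cur then 1 else 0) + fut w c cur xs"

definition gfac :: "real \<Rightarrow> real \<Rightarrow> params \<Rightarrow> nat \<Rightarrow> nat \<Rightarrow> real" where
  "gfac \<alpha> \<beta> p d m = 1 - pr p d + pr p d * exp (\<alpha> * real m / pr p d + \<beta>)"

fun Gf :: "real \<Rightarrow> real \<Rightarrow> params \<Rightarrow> event list \<Rightarrow> real" where
  "Gf \<alpha> \<beta> p [] = 1"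
| "Gf \<alpha> \<beta> p (VArr w c d # xs) = gfac \<alpha> \<beta> p d (fut w c c xs) * Gf \<alpha> \<beta> p xs"
| "Gf \<alpha> \<beta> p (EArr u v # xs) = Gf \<alpha> \<beta> p xs"

definition ewt :: "real \<Rightarrow> real \<Rightarrow> params \<Rightarrow> nat \<Rightarrow> event list \<Rightarrow> ent \<Rightarrow> real" where
  "ewt \<alpha> \<beta> p cur xs e = (case e of (w,c,d,k) \<Rightarrow> \<alpha> * (real k + real (fut w c cur xs)) / pr p d + \<beta>)"

definition Fw :: "real \<Rightarrow> real \<Rightarrow> params \<Rightarrow> ent list \<Rightarrow> real" where
  "Fw \<alpha> \<beta> p es = exp (\<Sum>(w,c,d,k)\<leftarrow>es. \<alpha> * real k / pr p d + \<beta>)"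

lemma pr_nonneg: "0 \<le> qv p \<Longrightarrow> 0 \<le> pr p d"
  by (simp add: pr_def)
lemma pr_le1: "pr p d \<le> 1"
  by (simp add: pr_def)

lemma gfac_pos: "0 \<le> qv p \<Longrightarrow> 0 \<le> gfac \<alpha> \<beta> p d m"
  unfolding gfac_def using pr_nonneg[of p d] pr_le1[of p d]
  by (intro add_nonneg_nonneg mult_nonneg_nonneg) auto

lemma Gf_pos: "0 \<le> qv p \<Longrightarrow> 0 \<le> Gf \<alpha> \<beta> p xs"
proof (induction xs)
  case (Cons x xs)
  then show ?case by (cases x) (auto intro!: mult_nonneg_nonneg gfac_pos)
qed auto

lemma ewt_V: "ewt \<alpha> \<beta> p cur (VArr w' c' d' # xs) e = ewt \<alpha> \<beta> p c' xs e"
  by (cases e) (simp add: ewt_def)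

lemma main_identity:
  assumes q: "0 \<le> qv p"
  shows "(\<integral>\<^sup>+ a'. ennreal (Fw \<alpha> \<beta> p (snd a')) \<partial>afin p (cur, es) xs)
     = ennreal (exp (\<Sum>e\<leftarrow>es. ewt \<alpha> \<beta> p cur xs e) * Gf \<alpha> \<beta> p xs)"
proof (induction xs arbitrary: cur es)
  case Nil
  show ?case
    by (simp add: Fw_def ewt_def case_prod_unfold)
next
  case (Cons x xs)
  show ?case
  proof (cases x)
    case (VArr w c d)
    define P where "P = pr p d"
    have P0: "0 \<le> P" and P1: "P \<le> 1" using pr_nonneg[OF q] pr_le1 by (auto simp: P_def)
    define S where "S = (\<Sum>e\<leftarrow>es. ewt \<alpha> \<beta> p c xs e)"
    define G where "G = Gf \<alpha> \<beta> p xs"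
    define nw where "nw = ewt \<alpha> \<beta> p c xs (w,c,d,0)"
    have G0: "0 \<le> G" using Gf_pos[OF q] by (simp add: G_def)
    have "(\<integral>\<^sup>+ a'. ennreal (Fw \<alpha> \<beta> p (snd a')) \<partial>afin p (cur, es) (x # xs))
       = (\<integral>\<^sup>+ b. ennreal (exp (\<Sum>e\<leftarrow>(if b then es @ [(w,c,d,0)] else es). ewt \<alpha> \<beta> p c xs e) * G) \<partial>bernoulli_pmf P)"
      by (simp add: VArr Cons.IH P_def G_def del: nn_integral_bernoulli_pmf)
    also have "\<dots> = ennreal (exp (S + nw) * G) * ennreal P + ennreal (exp S * G) * ennreal (1 - P)"
      using P0 P1 by (simp add: S_def nw_def)
    also have "\<dots> = ennreal (exp (S + nw) * G * P + exp S * G * (1 - P))"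
      using P0 P1 G0 by (simp add: ennreal_mult ennreal_plus)
    also have "exp (S + nw) * G * P + exp S * G * (1 - P) = exp S * ((1 - P + P * exp nw) * G)"
      by (simp add: exp_add algebra_simps)
    also have "1 - P + P * exp nw = gfac \<alpha> \<beta> p d (fut w c c xs)"
      by (simp add: gfac_def P_def nw_def ewt_def)
    finally show ?thesis
      by (simp add: VArr S_def G_def ewt_V)
  next
    case (EArr u v)
    have "(\<Sum>e\<leftarrow>map (\<lambda>(w,c,d,k). if w = u \<and> c = cur then (w,c,d,Suc k) else (w,c,d,k)) es. ewt \<alpha> \<beta> p cur xs e)
        = (\<Sum>e\<leftarrow>es. ewt \<alpha> \<beta> p cur (EArr u v # xs) e)"
      by (induction es) (auto simp: ewt_def add_divide_distrib diff_divide_distrib algebra_simps)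
    then show ?thesis
      by (simp add: EArr Cons.IH)
  qed
qed



definition blk :: "nat set set \<Rightarrow> (nat \<Rightarrow> nat) \<Rightarrow> nat list \<Rightarrow> (nat \<Rightarrow> nat list) \<Rightarrow> nat \<Rightarrow> event list" where
  "blk Es f vs L i = VArr (vs!i) (f (vs!i)) (degree Es (vs!i)) # map (\<lambda>u. EArr u (vs!i)) (L i)"

lemma fut_mapE: "fut w c cur (map (\<lambda>u. EArr u v) L @ ys) = (if c = cur then count_list L w else 0) + fut w c cur ys"
  by (induction L) auto

lemma fut_concat:
  "fut w c cur (concat (map (blk Es f vs L) js)) = (\<Sum>j\<leftarrow>js. if c = f (vs!j) then count_list (L j) w else 0)"
  by (induction js arbitrary: cur) (auto simp: blk_def fut_mapE)

lemma Gf_mapE: "Gf \<alpha> \<beta> p (map (\<lambda>u. EArr u v) L @ ys) = Gf \<alpha> \<beta> p ys"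
  by (induction L) auto

definition mm :: "nat set set \<Rightarrow> (nat \<Rightarrow> nat) \<Rightarrow> nat list \<Rightarrow> (nat \<Rightarrow> nat list) \<Rightarrow> nat \<Rightarrow> nat \<Rightarrow> nat" where
  "mm Es f vs L n j = (\<Sum>k\<leftarrow>[j..<n]. if f (vs!j) = f (vs!k) then count_list (L k) (vs!j) else 0)"

lemma Gf_concat:
  "Gf \<alpha> \<beta> p (concat (map (blk Es f vs L) [i..<n])) =
     (\<Prod>j\<in>{i..<n}. gfac \<alpha> \<beta> p (degree Es (vs!j)) (mm Es f vs L n j))"
proof (induction "n - i" arbitrary: i)
  case 0
  then show ?case by simp
next
  case (Suc x)
  then have i: "i < n" by simp
  have up: "[i..<n] = i # [Suc i..<n]" using i upt_conv_Cons by blast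
  have "fut (vs!i) (f (vs!i)) (f (vs!i)) (map (\<lambda>u. EArr u (vs!i)) (L i) @ concat (map (blk Es f vs L) [Suc i..<n]))
     = mm Es f vs L n i"
    by (simp add: fut_mapE fut_concat mm_def up)
  moreover have "{i..<n} = insert i {Suc i..<n}" using i by auto
  ultimately show ?case using Suc(1)[of "Suc i"] Suc(2)
    by (simp add: up blk_def Gf_mapE)
qed

lemma count_list_distinct: "distinct xs \<Longrightarrow> count_list xs x = (if x \<in> set xs then 1 else 0)"
  by (induction xs) (auto simp: count_list_0_iff)

lemma nth_in_take: "distinct vs \<Longrightarrow> j < length vs \<Longrightarrow> (vs!j \<in> set (take k vs)) = (j < k)"
proof
  assume d: "distinct vs" and j: "j < length vs" and "vs!j \<in> set (take k vs)"
  then obtain i where i: "i < length (take k vs)" "take k vs ! i = vs ! j" by (auto simp: in_set_conv_nth)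
  then have "vs ! i = vs ! j" "i < length vs" "i < k" by auto
  with d j have "i = j" using nth_eq_iff_index_eq by blast
  then show "j < k" using \<open>i < k\<close> by simp
next
  assume "distinct vs" "j < length vs" "j < k"
  then show "vs!j \<in> set (take k vs)" by (auto simp: in_set_conv_nth intro!: exI[of _ j])
qed

locale strm =
  fixes n :: nat and Es :: "nat set set" and f :: "nat \<Rightarrow> nat" and vs :: "nat list" and L :: "nat \<Rightarrow> nat list"
  assumes sg: "simple_graph n Es"
    and dvs: "distinct vs" and svs: "set vs = {0..<n}"
    and sL: "\<And>i. i < n \<Longrightarrow> distinct (L i) \<and> set (L i) = {u\<in>set (take i vs). {u, vs!i} \<in> Es}"
begin

lemma len_vs: "length vs = n"
  using distinct_card[OF dvs] svs by simp

lemma vs_lt: "j < n \<Longrightarrow> vs!j < n"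
  using svs len_vs nth_mem by fastforce

lemma Es_fin: "finite Es"
proof -
  have "Es \<subseteq> Pow {0..<n}" using sg by (auto simp: simple_graph_def)
  then show ?thesis by (rule finite_subset) simp
qed

lemma count_L: "j < n \<Longrightarrow> k < n \<Longrightarrow> count_list (L k) (vs!j) = (if j < k \<and> {vs!j, vs!k} \<in> Es then 1 else 0)"
  using sL[of k] nth_in_take[OF dvs, of j k] len_vs by (simp add: count_list_distinct)

definition Kset where "Kset j = {k. j < k \<and> k < n \<and> {vs!j, vs!k} \<in> Es \<and> f (vs!j) = f (vs!k)}"

lemma mm_card: "j < n \<Longrightarrow> mm Es f vs L n j = card (Kset j)"
proof -
  assume j: "j < n"
  have "mm Es f vs L n j = (\<Sum>k\<in>{j..<n}. if j < k \<and> {vs!j, vs!k} \<in> Es \<and> f (vs!j) = f (vs!k) then 1 else 0)"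
    unfolding mm_def sum_set_upt_conv_sum_list_nat[symmetric] using j
    by (intro sum.cong refl) (auto simp: count_L)
  also have "\<dots> = card {k\<in>{j..<n}. j < k \<and> {vs!j, vs!k} \<in> Es \<and> f (vs!j) = f (vs!k)}"
    by (simp add: sum.If_cases Int_def conj_commute)
  also have "{k\<in>{j..<n}. j < k \<and> {vs!j, vs!k} \<in> Es \<and> f (vs!j) = f (vs!k)} = Kset j"
    by (auto simp: Kset_def)
  finally show ?thesis .
qed

lemma mm_le_deg: "j < n \<Longrightarrow> mm Es f vs L n j \<le> degree Es (vs!j)"
proof -
  assume j: "j < n"
  have "card (Kset j) \<le> card {e\<in>Es. vs!j \<in> e}"
  proof (rule card_inj_on_le[where f = "\<lambda>k. {vs!j, vs!k}"])
    show "inj_on (\<lambda>k. {vs!j, vs!k}) (Kset j)"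
    proof
      fix k k' assume "k \<in> Kset j" "k' \<in> Kset j" "{vs!j, vs!k} = {vs!j, vs!k'}"
      then have "vs!k = vs!k'" "k < n" "k' < n" "j < k" "j < k'"
        using nth_eq_iff_index_eq[OF dvs] len_vs
        by (auto simp: Kset_def doubleton_eq_iff)
      then show "k = k'" using nth_eq_iff_index_eq[OF dvs] len_vs by auto
    qed
    show "(\<lambda>k. {vs!j, vs!k}) ` Kset j \<subseteq> {e\<in>Es. vs!j \<in> e}" by (auto simp: Kset_def)
    show "finite {e\<in>Es. vs!j \<in> e}" using Es_fin by simp
  qed
  then show ?thesis using mm_card[OF j] by (simp add: degree_def)
qed

definition Pset where "Pset = {(j,k). j < k \<and> k < n \<and> {vs!j, vs!k} \<in> Es \<and> f (vs!j) = f (vs!k)}"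

lemma Pset_sigma: "Pset = (SIGMA j:{..<n}. Kset j)"
  by (auto simp: Pset_def Kset_def)

lemma Pset_card: "card Pset = card (mono_edges Es f)"
proof -
  have inj: "inj_on (\<lambda>(j,k). {vs!j, vs!k}) Pset"
  proof (rule inj_onI, clarify)
    fix j k j' k' assume A: "(j,k) \<in> Pset" "(j',k') \<in> Pset" "{vs!j, vs!k} = {vs!j', vs!k'}"
    from A have lt: "j < k" "k < n" "j' < k'" "k' < n" by (auto simp: Pset_def)
    have ne: "\<And>a b. a < n \<Longrightarrow> b < n \<Longrightarrow> (vs!a = vs!b) = (a = b)"
      using nth_eq_iff_index_eq[OF dvs] len_vs by auto
    from A(3) have "(vs!j = vs!j' \<and> vs!k = vs!k') \<or> (vs!j = vs!k' \<and> vs!k = vs!j')"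
      by (auto simp: doubleton_eq_iff)
    then show "j = j' \<and> k = k'" using lt ne by auto
  qed
  have img: "(\<lambda>(j,k). {vs!j, vs!k}) ` Pset = mono_edges Es f"
  proof
    show "(\<lambda>(j,k). {vs!j, vs!k}) ` Pset \<subseteq> mono_edges Es f"
      by (auto simp: Pset_def mono_edges_def)
  next
    show "mono_edges Es f \<subseteq> (\<lambda>(j,k). {vs!j, vs!k}) ` Pset"
    proof
      fix e assume "e \<in> mono_edges Es f"
      then obtain u v where e: "e \<in> Es" "e = {u,v}" "f u = f v" by (auto simp: mono_edges_def)
      then have "card {u,v} = 2" "{u,v} \<subseteq> {0..<n}" using sg by (auto simp: simple_graph_def)
      then have uv: "u \<noteq> v" "u \<in> set vs" "v \<in> set vs" using svs by auto
      then obtain a b where ab: "a < n" "vs!a = u" "b < n" "vs!b = v"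
        using len_vs by (auto simp: in_set_conv_nth)
      with uv have "a \<noteq> b" by auto
      show "e \<in> (\<lambda>(j,k). {vs!j, vs!k}) ` Pset"
      proof (cases "a < b")
        case True
        then have "(a,b) \<in> Pset" using ab e by (auto simp: Pset_def)
        then show ?thesis using ab e by force
      next
        case False
        then have "(b,a) \<in> Pset" using ab e \<open>a \<noteq> b\<close> by (auto simp: Pset_def insert_commute)
        then show ?thesis using ab e by (force simp: insert_commute)
      qed
    qed
  qed
  show ?thesis using card_image[OF inj] img by simp
qed

lemma sum_mm: "(\<Sum>j<n. mm Es f vs L n j) = card (mono_edges Es f)"
proof -
  have "(\<Sum>j<n. mm Es f vs L n j) = (\<Sum>j<n. card (Kset j))" by (simp add: mm_card)
  also have "\<dots> = card Pset" unfolding Pset_sigma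
    by (subst card_SigmaI) (auto simp: Kset_def)
  finally show ?thesis using Pset_card by simp
qed

lemma sum_deg: "(\<Sum>j<n. degree Es (vs!j)) = 2 * card Es"
proof -
  have "(\<Sum>j<n. degree Es (vs!j)) = (\<Sum>v\<in>set vs. degree Es v)"
    using sum.reindex_bij_betw[OF bij_betw_nth[OF dvs refl refl], of "degree Es"] len_vs by simp
  also have "\<dots> = (\<Sum>v\<in>{0..<n}. \<Sum>e\<in>Es. if v \<in> e then 1 else 0)"
    using Es_fin by (simp add: svs degree_def sum.If_cases Int_def)
  also have "\<dots> = (\<Sum>e\<in>Es. \<Sum>v\<in>{0..<n}. if v \<in> e then 1 else 0)"
    by (rule sum.swap)
  also have "\<dots> = (\<Sum>e\<in>Es. 2)"
  proof (intro sum.cong refl)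
    fix e assume "e \<in> Es"
    then have "e \<subseteq> {0..<n}" "card e = 2" using sg by (auto simp: simple_graph_def)
    then have "{0..<n} \<inter> e = e" by auto
    then show "(\<Sum>v\<in>{0..<n}. if v \<in> e then 1 else 0) = (2::nat)"
      using \<open>card e = 2\<close> by (simp add: sum.If_cases)
  qed
  finally show ?thesis by simp
qed

end



lemma exp_neg_bound: "0 \<le> (x::real) \<Longrightarrow> x \<le> 1 \<Longrightarrow> exp (-x) \<le> 1 - x + x^2"
proof -
  assume x: "0 \<le> x" "x \<le> 1"
  have "exp (-x) * (1 + x) \<le> exp (-x) * exp x"
    by (intro mult_left_mono) auto
  also have "\<dots> = 1" by (simp add: exp_minus)
  also have "1 \<le> (1 - x + x^2) * (1 + x)" using x by (simp add: power2_eq_square algebra_simps)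
  finally show ?thesis using x by (simp add: mult_le_cancel_right)
qed

lemma exp_pm_bound: "0 \<le> (x::real) \<Longrightarrow> x \<le> 1 \<Longrightarrow> (\<sigma>::real) \<in> {1,-1} \<Longrightarrow> exp (\<sigma> * x) \<le> 1 + \<sigma> * x + x^2"
  using exp_bound[of x] exp_neg_bound[of x] by auto

lemma gfac_bound:
  assumes q: "0 < qv p" and l: "0 \<le> l" "l \<le> qv p" and s: "\<sigma> \<in> {1,-1}" and md: "m \<le> d"
  shows "gfac (\<sigma> * l) 0 p d m \<le> exp (\<sigma> * l * m + l^2 * m / qv p)"
proof -
  define P where "P = pr p d"
  have e0: "0 \<le> l^2 * m / qv p" using q by simp
  show ?thesis
  proof (cases "d = 0")
    case True
    then show ?thesis using md by (simp add: gfac_def pr_def)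
  next
    case False
    show ?thesis
    proof (cases "1 \<le> real d * qv p")
      case True
      then have "P = 1" by (simp add: P_def pr_def)
      then have "gfac (\<sigma> * l) 0 p d m = exp (\<sigma> * l * m)" by (simp add: gfac_def P_def[symmetric])
      also have "\<dots> \<le> exp (\<sigma> * l * m + l^2 * m / qv p)" using e0 by simp
      finally show ?thesis .
    next
      case False
      with \<open>d \<noteq> 0\<close> have P: "P = real d * qv p" "0 < P" "P < 1" using q by (auto simp: P_def pr_def)
      define x where "x = l * m / P"
      have x0: "0 \<le> x" using l P by (simp add: x_def)
      have "x \<le> l * d / P" unfolding x_def using l P md by (intro divide_right_mono mult_left_mono) auto
      also have "\<dots> = l / qv p" using P \<open>d \<noteq> 0\<close> by (simp add: field_simps)
      finally have xq: "x \<le> l / qv p" .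
      also have "l / qv p \<le> 1" using l q by simp
      finally have x1: "x \<le> 1" .
      have sx: "\<sigma> * l * real m / P = \<sigma> * x" unfolding x_def by (simp only: mult.assoc times_divide_eq_right)
      have "gfac (\<sigma> * l) 0 p d m = 1 + P * (exp (\<sigma> * x) - 1)"
        unfolding gfac_def P_def[symmetric] using sx by (simp add: algebra_simps)
      also have "\<dots> \<le> 1 + P * (\<sigma> * x + x^2)"
        using exp_pm_bound[OF x0 x1 s] P by (intro add_left_mono mult_left_mono) auto
      also have "\<dots> \<le> exp (P * (\<sigma> * x + x^2))" by (rule exp_ge_add_one_self)
      also have "P * (\<sigma> * x + x^2) = \<sigma> * l * m + l * m * x"
      proof -
        have "P \<noteq> 0" using P(2) by simp
        then show ?thesis unfolding x_def by (simp add: power2_eq_square field_simps)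
      qed
      also have "l * m * x \<le> l * m * (l / qv p)"
        using xq l by (intro mult_left_mono) auto
      also have "l * m * (l / qv p) = l^2 * m / qv p" by (simp add: power2_eq_square)
      finally show ?thesis by simp
    qed
  qed
qed

lemma gfac_count_bound:
  assumes q: "0 \<le> qv p"
  shows "gfac 0 1 p d m \<le> exp (2 * real d * qv p)"
proof -
  define P where "P = pr p d"
  have P: "0 \<le> P" "P \<le> 1" "P \<le> real d * qv p" using q by (auto simp: P_def pr_def)
  have e: "exp (1::real) \<le> 3" using exp_bound[of 1] by simp
  have "gfac 0 1 p d m = 1 + P * (exp 1 - 1)" by (simp add: gfac_def P_def[symmetric] algebra_simps)
  also have "\<dots> \<le> 1 + P * 2" using P e by (intro add_left_mono mult_left_mono) auto
  also have "\<dots> \<le> exp (P * 2)" by (rule exp_ge_add_one_self)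
  also have "\<dots> \<le> exp (2 * real d * qv p)" using P by simp
  finally show ?thesis .
qed



lemma Fw_est: "Fw \<alpha> 0 p es = exp (\<alpha> * est p es)"
proof -
  have "(\<Sum>(w,c,d,k)\<leftarrow>es. \<alpha> * real k / pr p d + 0) = \<alpha> * est p es"
    unfolding est_def by (induction es) (auto simp: algebra_simps)
  then show ?thesis by (simp add: Fw_def)
qed

lemma Fw_len: "Fw 0 1 p es = exp (real (length es))"
proof -
  have "(\<Sum>(w,c,d,k)\<leftarrow>es. 0 * real k / pr p d + 1) = real (length es)"
    by (induction es) auto
  then show ?thesis by (simp add: Fw_def)
qed

lemma Chernoff_pmf:
  fixes D :: "'a pmf"
  assumes "s > 0"
  shows "emeasure (measure_pmf D) {x. g x \<ge> a} \<le> ennreal (exp (-s * a)) * (\<integral>\<^sup>+x. ennreal (exp (s * g x)) \<partial>D)"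
  using Chernoff_ineq_nn_integral_ge[OF assms, of UNIV "measure_pmf D" g a] by simp

locale strm2 = strm +
  fixes \<epsilon> :: real and T :: nat
  assumes eps: "0 < \<epsilon>" "\<epsilon> < 1" and T1: "1 \<le> T" and MT: "T \<le> card (mono_edges Es f)"
begin

abbreviation "p \<equiv> (n, \<epsilon>, T)"
abbreviation "xs \<equiv> concat (map (blk Es f vs L) [0..<n])"
abbreviation "Dfin \<equiv> afin p (0, []) xs"
abbreviation "M \<equiv> card (mono_edges Es f)"
abbreviation "qq \<equiv> qv p"

lemma n_pos: "1 \<le> n"
proof (rule ccontr)
  assume "\<not> 1 \<le> n"
  then have "n = 0" by simp
  then have "M = 0" using sum_mm by simp
  then show False using MT T1 by simp
qed

lemma qq_pos: "0 < qq"
proof -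
  have "0 \<le> ln (real n)" using n_pos by simp
  then show ?thesis using eps T1 by (simp add: qv_def)
qed

lemma qq_eq: "\<epsilon>^2 * qq * T = 8 * (ln (real n) + 2)"
  using eps T1 by (simp add: qv_def)

lemma mgf: "(\<integral>\<^sup>+ a. ennreal (Fw \<alpha> \<beta> p (snd a)) \<partial>Dfin) =
   ennreal (\<Prod>j<n. gfac \<alpha> \<beta> p (degree Es (vs!j)) (mm Es f vs L n j))"
  using main_identity[where p=p and \<alpha>=\<alpha> and \<beta>=\<beta> and cur=0 and es="[]" and xs=xs] qq_pos Gf_concat[of \<alpha> \<beta> p Es f vs L 0 n]
  by (simp add: atLeast0LessThan)

lemma est_tail:
  assumes s: "\<sigma> \<in> {1,-1}"
  shows "emeasure (measure_pmf Dfin) {a. \<sigma> * est p (snd a) \<ge> \<sigma> * M + \<epsilon> * M}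
     \<le> ennreal (exp (- (\<epsilon>^2 * qq * M / 4)))"
proof -
  define l where "l = \<epsilon> * qq / 2"
  have l0: "0 < l" using eps qq_pos by (simp add: l_def)
  have lq: "l \<le> qq" using eps qq_pos by (simp add: l_def)
  have "(\<Prod>j<n. gfac (\<sigma> * l) 0 p (degree Es (vs!j)) (mm Es f vs L n j))
      \<le> (\<Prod>j<n. exp (\<sigma> * l * mm Es f vs L n j + l^2 * mm Es f vs L n j / qq))"
    using gfac_bound[OF qq_pos _ lq s] l0 mm_le_deg gfac_pos qq_pos
    by (intro prod_mono) (auto simp: less_imp_le)
  also have "\<dots> = exp (\<Sum>j<n. \<sigma> * l * mm Es f vs L n j + l^2 * mm Es f vs L n j / qq)"
    by (simp add: exp_sum)
  also have "(\<Sum>j<n. \<sigma> * l * mm Es f vs L n j + l^2 * mm Es f vs L n j / qq)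
     = \<sigma> * l * (\<Sum>j<n. real (mm Es f vs L n j)) + l^2 * (\<Sum>j<n. real (mm Es f vs L n j)) / qq"
    by (simp add: sum.distrib sum_distrib_left sum_divide_distrib)
  also have "(\<Sum>j<n. real (mm Es f vs L n j)) = real M"
    using sum_mm by (metis of_nat_sum)
  finally have B: "(\<Prod>j<n. gfac (\<sigma> * l) 0 p (degree Es (vs!j)) (mm Es f vs L n j))
     \<le> exp (\<sigma> * l * M + l^2 * M / qq)" .
  have C1: "emeasure (measure_pmf Dfin) {a. \<sigma> * est p (snd a) \<ge> \<sigma> * M + \<epsilon> * M}
      \<le> ennreal (exp (-l * (\<sigma> * M + \<epsilon> * M))) * (\<integral>\<^sup>+a. ennreal (exp (l * (\<sigma> * est p (snd a)))) \<partial>Dfin)"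
    by (rule Chernoff_pmf[OF l0])
  have "(\<integral>\<^sup>+a. ennreal (exp (l * (\<sigma> * est p (snd a)))) \<partial>Dfin)
      = (\<integral>\<^sup>+a. ennreal (Fw (\<sigma> * l) 0 p (snd a)) \<partial>Dfin)"
    by (simp add: Fw_est mult.assoc mult.commute mult.left_commute)
  also have "\<dots> \<le> ennreal (exp (\<sigma> * l * M + l^2 * M / qq))"
    unfolding mgf using B by (simp add: ennreal_leI)
  finally have C2: "(\<integral>\<^sup>+a. ennreal (exp (l * (\<sigma> * est p (snd a)))) \<partial>Dfin) \<le> ennreal (exp (\<sigma> * l * M + l^2 * M / qq))" .
  have "emeasure (measure_pmf Dfin) {a. \<sigma> * est p (snd a) \<ge> \<sigma> * M + \<epsilon> * M}
     \<le> ennreal (exp (-l * (\<sigma> * M + \<epsilon> * M))) * ennreal (exp (\<sigma> * l * M + l^2 * M / qq))"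
    using C1 C2 by (meson order.trans mult_left_mono zero_le)
  also have "ennreal (exp (-l * (\<sigma> * M + \<epsilon> * M))) * ennreal (exp (\<sigma> * l * M + l^2 * M / qq))
     = ennreal (exp (-l * (\<sigma> * M + \<epsilon> * M) + (\<sigma> * l * M + l^2 * M / qq)))"
    by (simp add: ennreal_mult[symmetric] exp_add[symmetric])
  also have "-l * (\<sigma> * M + \<epsilon> * M) + (\<sigma> * l * M + l^2 * M / qq) = - (\<epsilon>^2 * qq * M / 4)"
    using qq_pos by (simp add: l_def power2_eq_square field_simps)
  finally show ?thesis .
qed

end



context strm2
begin

lemma len_tail:
  "emeasure (measure_pmf Dfin) {a. real (length (snd a)) \<ge> t} \<le> ennreal (exp (- t + 4 * qq * card Es))"
proof -
  have "(\<Prod>j<n. gfac 0 1 p (degree Es (vs!j)) (mm Es f vs L n j))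
      \<le> (\<Prod>j<n. exp (2 * real (degree Es (vs!j)) * qq))"
    using gfac_count_bound gfac_pos qq_pos by (intro prod_mono) (auto simp: less_imp_le)
  also have "\<dots> = exp (\<Sum>j<n. 2 * real (degree Es (vs!j)) * qq)"
    by (simp add: exp_sum)
  also have "(\<Sum>j<n. 2 * real (degree Es (vs!j)) * qq) = 2 * qq * (\<Sum>j<n. real (degree Es (vs!j)))"
    by (simp add: sum_distrib_left algebra_simps)
  also have "(\<Sum>j<n. real (degree Es (vs!j))) = 2 * real (card Es)"
    using sum_deg by (metis of_nat_sum of_nat_mult of_nat_numeral)
  finally have B: "(\<Prod>j<n. gfac 0 1 p (degree Es (vs!j)) (mm Es f vs L n j)) \<le> exp (4 * qq * card Es)"
    by (simp add: mult.assoc)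
  have C1: "emeasure (measure_pmf Dfin) {a. real (length (snd a)) \<ge> t}
     \<le> ennreal (exp (-1 * t)) * (\<integral>\<^sup>+a. ennreal (exp (1 * real (length (snd a)))) \<partial>Dfin)"
    by (rule Chernoff_pmf) simp
  have C2: "(\<integral>\<^sup>+a. ennreal (exp (1 * real (length (snd a)))) \<partial>Dfin) \<le> ennreal (exp (4 * qq * card Es))"
    using mgf[of 0 1] B by (simp add: Fw_len ennreal_leI)
  have "emeasure (measure_pmf Dfin) {a. real (length (snd a)) \<ge> t}
      \<le> ennreal (exp (-1 * t)) * ennreal (exp (4 * qq * card Es))"
    using C1 C2 by (meson order.trans mult_left_mono zero_le)
  also have "\<dots> = ennreal (exp (- t + 4 * qq * card Es))"
    by (simp add: ennreal_mult[symmetric] exp_add[symmetric])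
  finally show ?thesis .
qed

lemma prob_of_em: "emeasure (measure_pmf D) A \<le> ennreal b \<Longrightarrow> 0 \<le> b \<Longrightarrow> measure_pmf.prob D A \<le> b"
  by (simp add: measure_pmf.emeasure_eq_measure)

lemma exp_small: "exp (- (2 * (ln (real n) + 2))) \<le> 1 / (2 * real n)"
proof -
  have n: "0 < real n" using n_pos by simp
  have el: "exp (ln (real n)) = real n" using n by simp
  have "exp (- (2 * (ln (real n) + 2))) = exp (-4) * (1 / (exp (ln (real n)) * exp (ln (real n))))"
    by (simp add: exp_diff exp_add[symmetric] exp_minus field_simps)
  also have "\<dots> = exp (-4) * (1 / (real n * real n))" by (simp only: el)
  also have "\<dots> \<le> (1/2) * (1 / real n)"
  proof (intro mult_mono)
    have "exp (4::real) \<ge> 1 + 4" by (rule exp_ge_add_one_self)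
    then show "exp (-4::real) \<le> 1/2" by (simp add: exp_minus field_simps)
    show "1 / (real n * real n) \<le> 1 / real n" using n_pos n by (simp add: field_simps)
  qed auto
  finally show ?thesis by simp
qed

lemma est_good: "measure_pmf.prob Dfin {a. \<bar>est p (snd a) - M\<bar> \<le> \<epsilon> * M} \<ge> 1 - 1 / real n"
proof -
  have tl: "measure_pmf.prob Dfin {a. \<sigma> * est p (snd a) \<ge> \<sigma> * M + \<epsilon> * M} \<le> 1 / (2 * real n)"
    if s: "\<sigma> \<in> {1,-1}" for \<sigma>
  proof -
    have "exp (- (\<epsilon>^2 * qq * M / 4)) \<le> exp (- (\<epsilon>^2 * qq * T / 4))"
      using MT eps qq_pos by (simp add: mult_left_mono)
    also have "\<epsilon>^2 * qq * T / 4 = 2 * (ln (real n) + 2)" using qq_eq by simp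
    finally have "exp (- (\<epsilon>^2 * qq * M / 4)) \<le> exp (- (2 * (ln (real n) + 2)))" by simp
    then have "exp (- (\<epsilon>^2 * qq * M / 4)) \<le> 1 / (2 * real n)" using exp_small by linarith
    then show ?thesis using est_tail[OF s] prob_of_em
      by (meson ennreal_leI order.trans exp_ge_zero)
  qed
  have "UNIV - {a. \<bar>est p (snd a) - M\<bar> \<le> \<epsilon> * M} \<subseteq>
      {a. 1 * est p (snd a) \<ge> 1 * M + \<epsilon> * M} \<union> {a. (-1) * est p (snd a) \<ge> (-1) * M + \<epsilon> * M}"
    by auto
  then have "measure_pmf.prob Dfin (UNIV - {a. \<bar>est p (snd a) - M\<bar> \<le> \<epsilon> * M})
     \<le> measure_pmf.prob Dfin ({a. 1 * est p (snd a) \<ge> 1 * M + \<epsilon> * M} \<union> {a. (-1) * est p (snd a) \<ge> (-1) * M + \<epsilon> * M})"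
    by (intro measure_pmf.finite_measure_mono) auto
  also have "\<dots> \<le> measure_pmf.prob Dfin {a. 1 * est p (snd a) \<ge> 1 * M + \<epsilon> * M}
       + measure_pmf.prob Dfin {a. (-1) * est p (snd a) \<ge> (-1) * M + \<epsilon> * M}"
    by (intro measure_Un_le) auto
  also have "\<dots> \<le> 1 / (2 * real n) + 1 / (2 * real n)"
    using tl[of 1] tl[of "-1"] by (intro add_mono) auto
  also have "\<dots> = 1 / real n" by simp
  finally have "measure_pmf.prob Dfin (UNIV - {a. \<bar>est p (snd a) - M\<bar> \<le> \<epsilon> * M}) \<le> 1 / real n" .
  moreover have "measure_pmf.prob Dfin (UNIV - {a. \<bar>est p (snd a) - M\<bar> \<le> \<epsilon> * M})
      = 1 - measure_pmf.prob Dfin {a. \<bar>est p (snd a) - M\<bar> \<le> \<epsilon> * M}"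
    using measure_pmf.prob_compl[of "{a. \<bar>est p (snd a) - M\<bar> \<le> \<epsilon> * M}" Dfin] by simp
  ultimately show ?thesis by simp
qed

definition tt where "tt = 4 * qq * card Es + ln (real n) + 1"

lemma len_good: "measure_pmf.prob Dfin {a. real (length (snd a)) < tt} \<ge> 1 - 1 / real n"
proof -
  have n: "0 < real n" using n_pos by simp
  have "exp (- tt + 4 * qq * card Es) = exp (-1) * (1 / real n)"
    using n by (simp add: tt_def exp_diff exp_add exp_minus exp_ln field_simps)
  also have "\<dots> \<le> 1 * (1 / real n)"
    using n by (intro mult_right_mono) auto
  finally have e: "exp (- tt + 4 * qq * card Es) \<le> 1 / real n" by simp
  have "measure_pmf.prob Dfin {a. real (length (snd a)) \<ge> tt} \<le> 1 / real n"
    using len_tail[of tt] prob_of_em e by (meson ennreal_leI order.trans exp_ge_zero)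
  moreover have "UNIV - {a. real (length (snd a)) < tt} = {a. real (length (snd a)) \<ge> tt}" by auto
  moreover have "measure_pmf.prob Dfin (UNIV - {a. real (length (snd a)) < tt})
      = 1 - measure_pmf.prob Dfin {a. real (length (snd a)) < tt}"
    using measure_pmf.prob_compl[of "{a. real (length (snd a)) < tt}" Dfin] by simp
  ultimately have "1 - measure_pmf.prob Dfin {a. real (length (snd a)) < tt} \<le> 1 / real n" by metis
  then show ?thesis by linarith
qed

end



fun nV :: "event list \<Rightarrow> nat" where
  "nV [] = 0"
| "nV (VArr w c d # xs) = Suc (nV xs)"
| "nV (EArr u v # xs) = nV xs"

lemma afin_len: "a' \<in> set_pmf (afin p a xs) \<Longrightarrow> length (snd a') \<le> length (snd a) + nV xs"
proof (induction xs arbitrary: a)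
  case (Cons x xs)
  obtain cur es where a: "a = (cur, es)" by (cases a)
  show ?case
  proof (cases x)
    case (VArr w c d)
    with Cons.prems a obtain b where "a' \<in> set_pmf (afin p (c, if b then es @ [(w,c,d,0)] else es) xs)"
      by auto
    from Cons.IH[OF this] show ?thesis by (simp add: VArr a split: if_splits)
  next
    case (EArr u v)
    with Cons.prems a show ?thesis using Cons.IH by fastforce
  qed
qed simp

lemma nV_mapE: "nV (map (\<lambda>u. EArr u v) L @ ys) = nV ys"
  by (induction L) auto

lemma nV_concat: "nV (concat (map (blk Es f vs L) js)) = length js"
  by (induction js) (auto simp: blk_def nV_mapE)

lemma len_enc: "length (enc a) = 1 + 4 * length (snd a)"
  by (simp add: enc_def)

lemma astep_len: "a' \<in> set_pmf (astep p a x) \<Longrightarrow> length (snd a) \<le> length (snd a')"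
  by (cases a; cases x) auto

lemma trace_mono: "tr \<in> set_pmf (run (alg_step Alg) p (enc a) xs) \<Longrightarrow> \<forall>s\<in>set tr. length s \<le> length (last tr)"
proof (induction xs arbitrary: a tr)
  case Nil
  then show ?case by simp
next
  case (Cons x xs)
  from Cons.prems obtain a' tr' where a': "a' \<in> set_pmf (astep p a x)"
    and tr': "tr' \<in> set_pmf (run (alg_step Alg) p (enc a') xs)" and tr: "tr = enc a # tr'"
    by (auto simp: Alg_def)
  have IH: "\<forall>s\<in>set tr'. length s \<le> length (last tr')" using Cons.IH[OF tr'] .
  have ne: "tr' \<noteq> []" using run_nonempty[OF tr'] .
  have "enc a' \<in> set tr'" using run_hd[OF tr'] ne by (metis list.set_sel(1))
  then have "length (enc a') \<le> length (last tr')" using IH by blast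
  moreover have "length (enc a) \<le> length (enc a')" using astep_len[OF a'] by (simp add: len_enc)
  ultimately show ?case using IH ne tr by auto
qed

definition goodst :: "nat \<Rightarrow> ast \<Rightarrow> nat \<Rightarrow> bool" where
  "goodst Bd a k \<longleftrightarrow> fst a < Bd \<and> (\<forall>w c d cnt. (w,c,d,cnt)\<in>set (snd a) \<longrightarrow> w < Bd \<and> c < Bd \<and> d < Bd \<and> cnt \<le> k)"

definition goodev :: "nat \<Rightarrow> event \<Rightarrow> bool" where
  "goodev Bd x \<longleftrightarrow> (case x of VArr w c d \<Rightarrow> w < Bd \<and> c < Bd \<and> d < Bd | EArr u v \<Rightarrow> True)"

lemma goodst_words: "goodst Bd a k \<Longrightarrow> k < Bd \<Longrightarrow> \<forall>w\<in>set (enc a). w < Bd"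
proof
  fix x assume g: "goodst Bd a k" and k: "k < Bd" and x: "x \<in> set (enc a)"
  show "x < Bd"
  proof (cases "x = fst a")
    case True then show ?thesis using g by (simp add: goodst_def)
  next
    case False
    then have "x \<in> set (flat (snd a))" using x by (simp add: enc_def)
    then obtain w c d cnt where "(w,c,d,cnt) \<in> set (snd a)" "x = w \<or> x = c \<or> x = d \<or> x = cnt"
      using set_flat by fastforce
    then show ?thesis using g k unfolding goodst_def by (meson le_less_trans)
  qed
qed

lemma astep_good: "a' \<in> set_pmf (astep p a x) \<Longrightarrow> goodst Bd a k \<Longrightarrow> goodev Bd x \<Longrightarrow> goodst Bd a' (Suc k)"
  by (cases a; cases x) (fastforce simp: goodst_def goodev_def split: if_splits)+

lemma trace_words: "tr \<in> set_pmf (run (alg_step Alg) p (enc a) xs) \<Longrightarrow> goodst Bd a k \<Longrightarrow>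
   \<forall>x\<in>set xs. goodev Bd x \<Longrightarrow> k + length xs < Bd \<Longrightarrow> \<forall>s\<in>set tr. \<forall>w\<in>set s. w < Bd"
proof (induction xs arbitrary: a tr k)
  case Nil
  then show ?case using goodst_words by auto
next
  case (Cons x xs)
  from Cons.prems(1) obtain a' tr' where a': "a' \<in> set_pmf (astep p a x)"
    and tr': "tr' \<in> set_pmf (run (alg_step Alg) p (enc a') xs)" and tr: "tr = enc a # tr'"
    by (auto simp: Alg_def)
  have g': "goodst Bd a' (Suc k)" using astep_good[OF a' Cons.prems(2)] Cons.prems(3) by simp
  have "\<forall>s\<in>set tr'. \<forall>w\<in>set s. w < Bd"
    using Cons.IH[OF tr' g'] Cons.prems(3,4) by simp
  moreover have "\<forall>w\<in>set (enc a). w < Bd" using goodst_words[OF Cons.prems(2)] Cons.prems(4) by simp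
  ultimately show ?case using tr by auto
qed



lemma len_concat_le: "(\<And>i. i \<in> set js \<Longrightarrow> length (g i) \<le> b) \<Longrightarrow> length (concat (map g js)) \<le> length js * b"
  by (induction js) (auto simp: add_mono)

context strm2
begin

lemma card_Es_le: "card Es \<le> n * n"
proof -
  have "Es \<subseteq> (\<lambda>(a,b). {a,b}) ` ({0..<n} \<times> {0..<n})"
  proof
    fix e assume "e \<in> Es"
    then have "e \<subseteq> {0..<n}" "card e = 2" using sg by (auto simp: simple_graph_def)
    then obtain a b where "e = {a,b}" by (auto simp: card_2_iff)
    with \<open>e \<subseteq> {0..<n}\<close> show "e \<in> (\<lambda>(a,b). {a,b}) ` ({0..<n} \<times> {0..<n})" by auto
  qed
  then have "card Es \<le> card ((\<lambda>(a,b). {a,b}) ` ({0..<n} \<times> {0..<n}))"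
    by (intro card_mono) auto
  also have "\<dots> \<le> card ({0..<n} \<times> {0..<n})" by (rule card_image_le) simp
  finally show ?thesis by (simp add: card_cartesian_product)
qed

lemma deg_le: "degree Es v \<le> n * n"
proof -
  have "degree Es v \<le> card Es" unfolding degree_def using Es_fin by (intro card_mono) auto
  then show ?thesis using card_Es_le by simp
qed

lemma len_xs: "length xs \<le> n + n * n"
proof -
  have "length xs \<le> length [0..<n] * (1 + n)"
  proof (rule len_concat_le)
    fix i assume "i \<in> set [0..<n]"
    then have i: "i < n" by simp
    have "distinct (L i)" using sL[OF i] by simp
    then have "length (L i) = card (set (L i))" by (simp add: distinct_card)
    also have "\<dots> \<le> card (set (take i vs))" using sL[OF i] by (intro card_mono) auto
    also have "\<dots> \<le> length (take i vs)" by (rule card_length)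
    also have "\<dots> \<le> n" using len_vs by simp
    finally show "length (blk Es f vs L i) \<le> 1 + n" by (simp add: blk_def)
  qed
  then show ?thesis by (simp add: algebra_simps)
qed

lemma M_le_E: "M \<le> card Es"
  using Es_fin by (intro card_mono) (auto simp: mono_edges_def)

lemma space_arith:
  assumes N: "real N \<le> real n" "real N < tt"
  shows "real (1 + 4 * N) \<le> 140 * (ln (real n) + 2)^2 * (1/\<epsilon>)^2 * min (real n) (real (card Es) / real T)"
proof -
  define Lg where "Lg = ln (real n) + 2"
  define u where "u = 1 / \<epsilon>"
  define R where "R = real (card Es) / real T"
  have Lg: "2 \<le> Lg" using n_pos by (simp add: Lg_def)
  have u: "1 \<le> u" using eps by (simp add: u_def)
  have R: "1 \<le> R" using M_le_E MT T1 by (simp add: R_def)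
  have u2: "1 \<le> u^2" using u by (simp add: one_le_power)
  have L2: "1 \<le> Lg^2" using Lg by (intro one_le_power) simp
  have "1 * 1 \<le> Lg^2 * u^2" using L2 u2 by (intro mult_mono) auto
  then have K: "1 \<le> Lg^2 * u^2" by simp
  show ?thesis
  proof (cases "R \<le> real n")
    case True
    have q1: "qq = 8 * Lg / (\<epsilon>^2 * real T)" by (simp add: qv_def Lg_def)
    have e0: "\<epsilon> \<noteq> 0" "real T \<noteq> 0" using eps T1 by auto
    have qE: "qq * card Es = 8 * Lg * u^2 * R"
      unfolding q1 u_def R_def using e0 by (simp add: power2_eq_square field_simps)
    have "real (1 + 4 * N) \<le> 1 + 4 * tt" using N by simp
    also have "tt = 4 * (qq * card Es) + (Lg - 2) + 1" by (simp add: tt_def Lg_def)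
    also have "1 + 4 * (4 * (qq * card Es) + (Lg - 2) + 1) = 128 * Lg * u^2 * R + 4 * Lg - 3"
      unfolding qE by (simp add: algebra_simps)
    also have "\<dots> \<le> 128 * Lg * u^2 * R + 4 * Lg * (u^2 * R)"
    proof -
      have "1 * 1 \<le> u^2 * R" using u2 R by (intro mult_mono) auto
      then have "1 \<le> u^2 * R" by simp
      then have "Lg * 1 \<le> Lg * (u^2 * R)" using Lg by (intro mult_left_mono) auto
      then show ?thesis by (simp add: mult.commute mult.left_commute)
    qed
    also have "\<dots> = 132 * Lg * u^2 * R" by (simp add: algebra_simps)
    also have "\<dots> \<le> 140 * Lg^2 * u^2 * R"
    proof -
      have "Lg \<le> Lg^2" using Lg by (simp add: power2_eq_square)
      moreover have "0 \<le> u^2 * R" using R by simp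
      ultimately have "132 * Lg * (u^2 * R) \<le> 140 * Lg^2 * (u^2 * R)"
        using Lg by (intro mult_right_mono) auto
      then show ?thesis by (simp add: algebra_simps)
    qed
    finally have X: "real (1 + 4 * N) \<le> 140 * Lg^2 * u^2 * R" .
    have mR: "min (real n) (real (card Es) / real T) = R" using True by (simp add: R_def)
    show ?thesis unfolding mR using X by (simp only: Lg_def u_def)
  next
    case False
    have "real (1 + 4 * N) \<le> 5 * real n" using N n_pos by simp
    also have "\<dots> \<le> 140 * Lg^2 * u^2 * real n"
    proof -
      have "5 * 1 \<le> 140 * (Lg^2 * u^2)" using K by simp
      then have "5 * real n \<le> 140 * (Lg^2 * u^2) * real n" by (intro mult_right_mono) auto
      then show ?thesis by (simp add: algebra_simps)
    qed
    finally have X: "real (1 + 4 * N) \<le> 140 * Lg^2 * u^2 * real n" .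
    have mR: "min (real n) (real (card Es) / real T) = real n" using False by (simp add: R_def)
    show ?thesis unfolding mR using X by (simp only: Lg_def u_def)
  qed
qed

end



context strm2
begin

abbreviation "D \<equiv> exec Alg p xs"

lemma D_eq: "D = run (alg_step Alg) p (enc (0, [])) xs"
  by (simp add: exec_def Alg_def bind_return_pmf)

lemma prob_last: "measure_pmf.prob D {tr. P (last tr)} = measure_pmf.prob Dfin {a. P (enc a)}"
proof -
  have "measure_pmf.prob D {tr. P (last tr)} = measure_pmf.prob (map_pmf last D) {s. P s}"
    by (simp add: vimage_def)
  also have "map_pmf last D = map_pmf enc Dfin" unfolding D_eq by (rule last_run)
  also have "measure_pmf.prob (map_pmf enc Dfin) {s. P s} = measure_pmf.prob Dfin {a. P (enc a)}"
    by (simp add: vimage_def)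
  finally show ?thesis .
qed

lemma final_correct:
  "measure_pmf.prob D {tr. \<bar>alg_out Alg p (last tr) - M\<bar> \<le> \<epsilon> * M} \<ge> 1 - 1 / real n powr 1"
proof -
  have "measure_pmf.prob D {tr. \<bar>alg_out Alg p (last tr) - M\<bar> \<le> \<epsilon> * M}
      = measure_pmf.prob Dfin {a. \<bar>est p (snd a) - M\<bar> \<le> \<epsilon> * M}"
  proof -
    have "measure_pmf.prob D {tr. \<bar>alg_out Alg p (last tr) - M\<bar> \<le> \<epsilon> * M}
      = measure_pmf.prob Dfin {a. \<bar>alg_out Alg p (enc a) - M\<bar> \<le> \<epsilon> * M}"
      by (rule prob_last)
    moreover have "\<And>a. alg_out Alg p (enc a) = est p (snd a)" by (simp add: Alg_def)
    ultimately show ?thesis by simp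
  qed
  then show ?thesis using est_good n_pos by simp
qed

lemma final_space:
  "measure_pmf.prob D {tr. real (trace_space tr) \<le>
      140 * (ln (real n) + 2) ^ 2 * (1 / \<epsilon>) ^ 2 * min (real n) (real (card Es) / real T)}
    \<ge> 1 - 1 / real n powr 1"
proof -
  define B where "B = 140 * (ln (real n) + 2) ^ 2 * (1 / \<epsilon>) ^ 2 * min (real n) (real (card Es) / real T)"
  have "{tr. real (length (last tr)) \<le> B} \<inter> set_pmf D \<subseteq> {tr. real (trace_space tr) \<le> B}"
  proof clarify
    fix tr assume le: "real (length (last tr)) \<le> B" and tr: "tr \<in> set_pmf D"
    have tr': "tr \<in> set_pmf (run (alg_step Alg) p (enc (0, [])) xs)" using tr D_eq by simp
    have "trace_space tr = length (last tr)"
      unfolding trace_space_def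
      using trace_mono[OF tr'] run_nonempty[OF tr'] by (intro Max_eqI) auto
    then show "real (trace_space tr) \<le> B" using le by simp
  qed
  then have "measure_pmf.prob D ({tr. real (length (last tr)) \<le> B} \<inter> set_pmf D)
      \<le> measure_pmf.prob D {tr. real (trace_space tr) \<le> B}"
    by (intro measure_pmf.finite_measure_mono) auto
  then have S1: "measure_pmf.prob D {tr. real (length (last tr)) \<le> B}
      \<le> measure_pmf.prob D {tr. real (trace_space tr) \<le> B}"
    by (simp add: measure_Int_set_pmf)
  have "{a. real (length (snd a)) < tt} \<inter> set_pmf Dfin \<subseteq> {a. real (length (enc a)) \<le> B}"
  proof clarify
    fix a assume lt: "real (length (snd a)) < tt" and a: "a \<in> set_pmf Dfin"
    have "length (snd a) \<le> n" using afin_len[OF a] nV_concat[of Es f vs L "[0..<n]"] by simp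
    then have "real (1 + 4 * length (snd a)) \<le> B"
      unfolding B_def using lt by (intro space_arith) auto
    then show "real (length (enc a)) \<le> B" by (simp add: len_enc)
  qed
  then have "measure_pmf.prob Dfin ({a. real (length (snd a)) < tt} \<inter> set_pmf Dfin)
      \<le> measure_pmf.prob Dfin {a. real (length (enc a)) \<le> B}"
    by (intro measure_pmf.finite_measure_mono) auto
  then have S2: "measure_pmf.prob Dfin {a. real (length (snd a)) < tt}
      \<le> measure_pmf.prob D {tr. real (length (last tr)) \<le> B}"
    using prob_last[where P="\<lambda>s. real (length s) \<le> B"] by (simp add: measure_Int_set_pmf)
  show ?thesis using len_good S1 S2 n_pos unfolding B_def[symmetric] by simp
qed

lemma final_words:
  assumes fC: "\<forall>v<n. f v < C"
  shows "\<forall>tr\<in>set_pmf D. \<forall>s\<in>set tr. \<forall>w\<in>set s. w < (n + C + 2) ^ 2"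
proof (intro ballI)
  fix tr s w assume tr: "tr \<in> set_pmf D" and s: "s \<in> set tr" and w: "w \<in> set s"
  define Bd where "Bd = n + n * n + C + 1"
  have tr': "tr \<in> set_pmf (run (alg_step Alg) p (enc (0, [])) xs)" using tr D_eq by simp
  have g0: "goodst Bd (0, []) 0" by (simp add: goodst_def Bd_def)
  have gev: "\<forall>x\<in>set xs. goodev Bd x"
  proof
    fix x assume "x \<in> set xs"
    then obtain i where i: "i < n" and x: "x \<in> set (blk Es f vs L i)" by auto
    have "vs!i < n" using vs_lt[OF i] .
    moreover have "f (vs!i) < C" using fC \<open>vs!i < n\<close> by simp
    moreover have "degree Es (vs!i) \<le> n * n" by (rule deg_le)
    ultimately show "goodev Bd x" using x by (auto simp: blk_def goodev_def Bd_def)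
  qed
  have "0 + length xs < Bd" using len_xs by (simp add: Bd_def)
  from trace_words[OF tr' g0 gev this] s w have "w < Bd" by blast
  also have "Bd \<le> (n + C + 2) ^ 2" by (simp add: Bd_def power2_eq_square algebra_simps)
  finally show "w < (n + C + 2) ^ 2" .
qed

end

theorem theorem3p2:
  shows "\<exists>(A::stream_alg) (K::nat) (c::real) (a::real) (b::nat). c > 0 \<and>
    (\<forall>n (\<epsilon>::real) (T::nat) (C::nat) Es f xs.
       0 < \<epsilon> \<and> \<epsilon> < 1 \<and> T \<ge> 1 \<and> simple_graph n Es \<and>
       (\<forall>v<n. f v < C) \<and> card (mono_edges Es f) \<ge> T \<and> VAdeg_stream n Es f xs \<longrightarrow>
       (let p = (n, \<epsilon>, T); D = exec A p xs; M = real (card (mono_edges Es f)) in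
         (\<forall>tr\<in>set_pmf D. \<forall>s\<in>set tr. \<forall>w\<in>set s. w < (n + C + 2) ^ K) \<and>
         measure_pmf.prob D {tr. \<bar>alg_out A p (last tr) - M\<bar> \<le> \<epsilon> * M}
            \<ge> 1 - 1 / real n powr c \<and>
         measure_pmf.prob D {tr. real (trace_space tr) \<le>
            a * (ln (real n) + 2) ^ b * (1 / \<epsilon>) ^ b * min (real n) (real (card Es) / real T)}
            \<ge> 1 - 1 / real n powr c))"
proof -
  have "\<forall>n (\<epsilon>::real) (T::nat) (C::nat) Es f xs.
       0 < \<epsilon> \<and> \<epsilon> < 1 \<and> T \<ge> 1 \<and> simple_graph n Es \<and>
       (\<forall>v<n. f v < C) \<and> card (mono_edges Es f) \<ge> T \<and> VAdeg_stream n Es f xs \<longrightarrow>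
       (let p = (n, \<epsilon>, T); D = exec Alg p xs; M = real (card (mono_edges Es f)) in
         (\<forall>tr\<in>set_pmf D. \<forall>s\<in>set tr. \<forall>w\<in>set s. w < (n + C + 2) ^ 2) \<and>
         measure_pmf.prob D {tr. \<bar>alg_out Alg p (last tr) - M\<bar> \<le> \<epsilon> * M}
            \<ge> 1 - 1 / real n powr 1 \<and>
         measure_pmf.prob D {tr. real (trace_space tr) \<le>
            140 * (ln (real n) + 2) ^ 2 * (1 / \<epsilon>) ^ 2 * min (real n) (real (card Es) / real T)}
            \<ge> 1 - 1 / real n powr 1)"
  proof (intro allI impI)
  fix n :: nat and \<epsilon> :: real and T C :: nat and Es :: "nat set set" and f :: "nat \<Rightarrow> nat" and zs :: "event list"
  assume H: "0 < \<epsilon> \<and> \<epsilon> < 1 \<and> T \<ge> 1 \<and> simple_graph n Es \<and>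
       (\<forall>v<n. f v < C) \<and> card (mono_edges Es f) \<ge> T \<and> VAdeg_stream n Es f zs"
  then obtain vs L where vs: "distinct vs" "set vs = {0..<n}"
    and L: "\<forall>i<n. distinct (L i) \<and> set (L i) = {u\<in>set (take i vs). {u, vs!i} \<in> Es}"
    and xs: "zs = concat (map (\<lambda>i. VArr (vs!i) (f (vs!i)) (degree Es (vs!i))
                                # map (\<lambda>u. EArr u (vs!i)) (L i)) [0..<n])"
    unfolding VAdeg_stream_def by blast
  interpret strm2 n Es f vs L \<epsilon> T
    using H vs L by unfold_locales auto
  have xs': "zs = concat (map (blk Es f vs L) [0..<n])" unfolding blk_def using xs by simp
  show "let p = (n, \<epsilon>, T); D = exec Alg p zs; M = real (card (mono_edges Es f)) in
         (\<forall>tr\<in>set_pmf D. \<forall>s\<in>set tr. \<forall>w\<in>set s. w < (n + C + 2) ^ 2) \<and>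
         measure_pmf.prob D {tr. \<bar>alg_out Alg p (last tr) - M\<bar> \<le> \<epsilon> * M}
            \<ge> 1 - 1 / real n powr 1 \<and>
         measure_pmf.prob D {tr. real (trace_space tr) \<le>
            140 * (ln (real n) + 2) ^ 2 * (1 / \<epsilon>) ^ 2 * min (real n) (real (card Es) / real T)}
            \<ge> 1 - 1 / real n powr 1"
    unfolding Let_def xs' using final_words final_correct final_space H by blast
  qed
  then show ?thesis by (intro exI[of _ Alg] exI[of _ 2] exI[of _ "1::real"] exI[of _ "140::real"]) auto
qed

end
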